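(* Let $n\ge 1$ be an integer. Consider the graph consisting of two disjoint copies of the star $K_{1,n}$ together with one additional edge joining their two centres, where one centre is tinted blue, the other centre is tinted red, and all leaves are untinted. The game value of \textsc{Snort} played on this position is $\pm n=\{n\mid -n\}$ if $n$ is even, and $\pm(n* )=\{\,n+* \mid -n+*\,\}$ if $n$ is odd.
   Context: \textsc{Snort} is a two-player normal-play combinatorial game (the player unable to move loses) between Left (blue) and Right (red), played on a finite simple graph in which each vertex may be tinted blue, tinted red, or untinted. Left may move on any vertex not tinted red; Right may move on any vertex not tinted blue. A move on vertex $v$ deletes $v$ and tints all neighbours of $v$ in the mover's colour; any vertex that thereby becomes tinted in both colours is deleted. Game values are in the standard sense of combinatorial game theory: $\{A \mid B\}$ denotes the game with Left options $A$ and Right options $B$, $*=\{0\mid 0\}$, $n*$ denotes the sum $n+*$, and $\pm G$ denotes $\{G\mid -G\}$. $K_{1,n}$ is the star with one centre vertex adjacent to $n$ leaves. *)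

theory Defs
  imports Main
begin

datatype game = Game (lopts: "game list") (ropts: "game list")

lemma game_size_lopt[termination_simp]: "g \<in> set GL \<Longrightarrow> size g < size (Game GL GR)"
  by (induction GL) auto

lemma game_size_ropt[termination_simp]: "g \<in> set GR \<Longrightarrow> size g < size (Game GL GR)"
  by (induction GR) auto

function game_le :: "game \<Rightarrow> game \<Rightarrow> bool" where
  "game_le (Game GL GR) (Game HL HR) =
     ((\<forall>gl\<in>set GL. \<not> game_le (Game HL HR) gl) \<and>
      (\<forall>hr\<in>set HR. \<not> game_le hr (Game GL GR)))"
  by pat_completeness auto
termination
  by (relation "measure (\<lambda>(g,h). size g + size h)")
     (auto dest: game_size_lopt game_size_ropt)

definition game_eq :: "game \<Rightarrow> game \<Rightarrow> bool" where
  "game_eq G H \<longleftrightarrow> game_le G H \<and> game_le H G"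

fun game_neg :: "game \<Rightarrow> game" where
  "game_neg (Game GL GR) = Game (map game_neg GR) (map game_neg GL)"

function game_add :: "game \<Rightarrow> game \<Rightarrow> game" where
  "game_add (Game GL GR) (Game HL HR) =
     Game (map (\<lambda>gl. game_add gl (Game HL HR)) GL @ map (\<lambda>hl. game_add (Game GL GR) hl) HL)
          (map (\<lambda>gr. game_add gr (Game HL HR)) GR @ map (\<lambda>hr. game_add (Game GL GR) hr) HR)"
  by pat_completeness auto
termination
  by (relation "measure (\<lambda>(g,h). size g + size h)")
     (auto dest: game_size_lopt game_size_ropt)

definition game_zero :: game where "game_zero = Game [] []"

definition game_star :: game where "game_star = Game [game_zero] [game_zero]"

fun game_nat :: "nat \<Rightarrow> game" where
  "game_nat 0 = game_zero"
| "game_nat (Suc n) = Game [game_nat n] []"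

datatype tint = Untinted | Blue | Red

datatype player = Left | Right

fun pcol :: "player \<Rightarrow> tint" where
  "pcol Left = Blue" | "pcol Right = Red"

fun ocol :: "player \<Rightarrow> tint" where
  "ocol Left = Red" | "ocol Right = Blue"

text \<open>A position: finite vertex set V, edge relation E (symmetric, irreflexive;
  only edges between vertices of V are relevant), tint function t.
  The move deletes v, tints all neighbours of v in p's colour, and deletes
  neighbours that thereby become tinted in both colours (i.e. those already tinted
  in the opponent's colour).\<close>

definition nbrs :: "nat set \<Rightarrow> (nat \<Rightarrow> nat \<Rightarrow> bool) \<Rightarrow> nat \<Rightarrow> nat set" where
  "nbrs V E v = {u \<in> V. u \<noteq> v \<and> E v u}"

definition can_move :: "player \<Rightarrow> (nat \<Rightarrow> tint) \<Rightarrow> nat \<Rightarrow> bool" where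
  "can_move p t v \<longleftrightarrow> t v \<noteq> ocol p"

definition move_V :: "player \<Rightarrow> nat set \<Rightarrow> (nat \<Rightarrow> nat \<Rightarrow> bool) \<Rightarrow> (nat \<Rightarrow> tint) \<Rightarrow> nat \<Rightarrow> nat set" where
  "move_V p V E t v = V - {v} - {u \<in> nbrs V E v. t u = ocol p}"

definition move_t :: "player \<Rightarrow> nat set \<Rightarrow> (nat \<Rightarrow> nat \<Rightarrow> bool) \<Rightarrow> (nat \<Rightarrow> tint) \<Rightarrow> nat \<Rightarrow> (nat \<Rightarrow> tint)" where
  "move_t p V E t v = (\<lambda>u. if u \<in> nbrs V E v then pcol p else t u)"

text \<open>Game tree of a Snort position, computed with a fuel parameter; every move
  deletes at least one vertex, so fuel \<open>card V\<close> suffices for finite V.\<close>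
fun snort_aux :: "nat \<Rightarrow> nat set \<Rightarrow> (nat \<Rightarrow> nat \<Rightarrow> bool) \<Rightarrow> (nat \<Rightarrow> tint) \<Rightarrow> game" where
  "snort_aux 0 V E t = Game [] []"
| "snort_aux (Suc k) V E t =
     Game (map (\<lambda>v. snort_aux k (move_V Left V E t v) E (move_t Left V E t v))
               (filter (can_move Left t) (sorted_list_of_set V)))
          (map (\<lambda>v. snort_aux k (move_V Right V E t v) E (move_t Right V E t v))
               (filter (can_move Right t) (sorted_list_of_set V)))"

definition snort :: "nat set \<Rightarrow> (nat \<Rightarrow> nat \<Rightarrow> bool) \<Rightarrow> (nat \<Rightarrow> tint) \<Rightarrow> game" where
  "snort V E t = snort_aux (card V) V E t"

definition dstar_V :: "nat \<Rightarrow> nat set" where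
  "dstar_V n = {0 .. 2*n+1}"

definition dstar_E :: "nat \<Rightarrow> nat \<Rightarrow> nat \<Rightarrow> bool" where
  "dstar_E n u v \<longleftrightarrow>
     (u = 0 \<and> v = 1) \<or> (u = 1 \<and> v = 0) \<or>
     (u = 0 \<and> v \<in> {2 .. n+1}) \<or> (v = 0 \<and> u \<in> {2 .. n+1}) \<or>
     (u = 1 \<and> v \<in> {n+2 .. 2*n+1}) \<or> (v = 1 \<and> u \<in> {n+2 .. 2*n+1})"

definition dstar_t :: "nat \<Rightarrow> tint" where
  "dstar_t v = (if v = 0 then Blue else if v = 1 then Red else Untinted)"

end

theory Submission
  imports Defs
begin


lemma le_Game: "game_le (Game GL GR) H \<longleftrightarrow>
   (\<forall>gl\<in>set GL. \<not> game_le H gl) \<and> (\<forall>hr\<in>set (ropts H). \<not> game_le hr (Game GL GR))"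
  by (cases H) simp

lemma le_unfold: "game_le G H = ((\<forall>gl\<in>set (lopts G). \<not> game_le H gl) \<and> (\<forall>hr\<in>set (ropts H). \<not> game_le hr G))"
  by (cases G; cases H) simp

lemma le_lopt_D: "game_le (Game GL GR) h \<Longrightarrow> gl \<in> set GL \<Longrightarrow> \<not> game_le h gl"
  by (cases h) auto
lemma le_ropt_D: "game_le g (Game HL HR) \<Longrightarrow> hr \<in> set HR \<Longrightarrow> \<not> game_le hr g"
  by (cases g) auto

lemma game_le_refl: "game_le x x"
proof (induction x)
  case (Game GL GR)
  show ?case
  proof (simp only: game_le.simps, intro conjI ballI notI)
    fix gl assume gl: "gl \<in> set GL" and le: "game_le (Game GL GR) gl"
    obtain A B where g: "gl = Game A B" by (cases gl)
    from le_lopt_D[OF le gl] have "\<not> game_le gl gl" .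
    with Game.IH(1)[OF gl] show False by simp
  next
    fix gr assume gr: "gr \<in> set GR" and le: "game_le gr (Game GL GR)"
    obtain A B where g: "gr = Game A B" by (cases gr)
    from le_ropt_D[OF le gr] have "\<not> game_le gr gr" .
    with Game.IH(2)[OF gr] show False by simp
  qed
qed

lemma game_le_trans: "game_le x y \<Longrightarrow> game_le y z \<Longrightarrow> game_le x z"
proof (induction "size x + size y + size z" arbitrary: x y z rule: less_induct)
  case less
  obtain XL XR where x: "x = Game XL XR" by (cases x)
  obtain YL YR where y: "y = Game YL YR" by (cases y)
  obtain ZL ZR where z: "z = Game ZL ZR" by (cases z)
  show ?case unfolding x z game_le.simps
  proof (intro conjI ballI notI)
    fix xl assume xl: "xl \<in> set XL" and h: "game_le (Game ZL ZR) xl"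
    have "game_le y xl"
      using less.hyps[of y z xl] less.prems(2) h xl game_size_lopt[OF xl] x z by simp
    with less.prems(1) xl show False unfolding x y by simp
  next
    fix zr assume zr: "zr \<in> set ZR" and h: "game_le zr (Game XL XR)"
    have "game_le zr y"
      using less.hyps[of zr x y] less.prems(1) h zr game_size_ropt[OF zr] x z by simp
    with less.prems(2) zr show False unfolding z y by simp
  qed
qed

lemma eq_refl: "game_eq x x" by (simp add: game_eq_def game_le_refl)
lemma eq_sym: "game_eq x y \<Longrightarrow> game_eq y x" by (simp add: game_eq_def)
lemma eq_trans: "game_eq x y \<Longrightarrow> game_eq y z \<Longrightarrow> game_eq x z"
  unfolding game_eq_def by (meson game_le_trans)

lemma not_le_lopt: "gl \<in> set GL \<Longrightarrow> \<not> game_le (Game GL GR) gl"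
  using game_le_refl[of "Game GL GR"] by simp
lemma not_ropt_le: "gr \<in> set GR \<Longrightarrow> \<not> game_le gr (Game GL GR)"
  using game_le_refl[of "Game GL GR"] by simp

lemma le_by_corr:
  assumes "\<forall>x\<in>set GL. \<exists>y\<in>set HL. game_le x y"
      and "\<forall>y\<in>set HR. \<exists>x\<in>set GR. game_le x y"
  shows "game_le (Game GL GR) (Game HL HR)"
  unfolding game_le.simps
proof (intro conjI ballI notI)
  fix gl assume gl: "gl \<in> set GL" and h: "game_le (Game HL HR) gl"
  then obtain hl where "hl \<in> set HL" "game_le gl hl" using assms(1) by blast
  then show False using game_le_trans[OF h] not_le_lopt by blast
next
  fix hr assume hr: "hr \<in> set HR" and h: "game_le hr (Game GL GR)"
  then obtain gr where "gr \<in> set GR" "game_le gr hr" using assms(2) by blast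
  then show False using game_le_trans[OF _ h] not_ropt_le by blast
qed

lemma eq_by_corr:
  assumes "\<forall>x\<in>set GL. \<exists>y\<in>set HL. game_eq x y"
      and "\<forall>y\<in>set HL. \<exists>x\<in>set GL. game_eq x y"
      and "\<forall>x\<in>set GR. \<exists>y\<in>set HR. game_eq x y"
      and "\<forall>y\<in>set HR. \<exists>x\<in>set GR. game_eq x y"
  shows "game_eq (Game GL GR) (Game HL HR)"
  unfolding game_eq_def
  using assms by (intro conjI le_by_corr) (fastforce simp: game_eq_def)+

lemma eq_by_corr2:
  assumes "\<forall>x\<in>set (lopts G). \<exists>y\<in>set (lopts H). game_eq x y"
      and "\<forall>y\<in>set (lopts H). \<exists>x\<in>set (lopts G). game_eq x y"
      and "\<forall>x\<in>set (ropts G). \<exists>y\<in>set (ropts H). game_eq x y"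
      and "\<forall>y\<in>set (ropts H). \<exists>x\<in>set (ropts G). game_eq x y"
  shows "game_eq G H"
  using eq_by_corr[OF assms] by simp

lemma neg_neg[simp]: "game_neg (game_neg x) = x"
  by (induction x) (simp add: map_idI)

lemma le_neg: "game_le (game_neg x) (game_neg y) \<longleftrightarrow> game_le y x"
proof (induction "size x + size y" arbitrary: x y rule: less_induct)
  case less
  obtain XL XR where x: "x = Game XL XR" by (cases x)
  obtain YL YR where y: "y = Game YL YR" by (cases y)
  have 1: "\<And>xr. xr \<in> set XR \<Longrightarrow> game_le (game_neg y) (game_neg xr) \<longleftrightarrow> game_le xr y"
    using less.hyps game_size_ropt x by fastforce
  have 2: "\<And>yl. yl \<in> set YL \<Longrightarrow> game_le (game_neg yl) (game_neg x) \<longleftrightarrow> game_le x yl"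
    using less.hyps game_size_lopt y by fastforce
  show ?case unfolding x y using 1 2 x y by auto
qed



fun Iso :: "nat \<Rightarrow> nat \<Rightarrow> nat \<Rightarrow> game" where
  "Iso k r u = Game ((if 0 < k then [Iso (k-1) r u] else []) @ (if 0 < u then [Iso k r (u-1)] else []))
                    ((if 0 < r then [Iso k (r-1) u] else []) @ (if 0 < u then [Iso k r (u-1)] else []))"

declare Iso.simps[simp del]

lemma neg_Iso: "game_neg (Iso k r u) = Iso r k u"
proof (induction "k+r+u" arbitrary: k r u rule: less_induct)
  case less
  have IH: "\<And>a b c. a+b+c < k+r+u \<Longrightarrow> game_neg (Iso a b c) = Iso b a c"
    using less by blast
  show ?case by (subst (1 2) Iso.simps) (simp add: IH)
qed

lemma set_if: "set ((if P then [a] else []) @ (if Q then [b] else [])) = {x. (P \<and> x = a) \<or> (Q \<and> x = b)}"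
  by auto

lemma lopts_Iso: "lopts (Iso k r u) = (if 0 < k then [Iso (k-1) r u] else []) @ (if 0 < u then [Iso k r (u-1)] else [])"
  by (subst Iso.simps) simp
lemma ropts_Iso: "ropts (Iso k r u) = (if 0 < r then [Iso k (r-1) u] else []) @ (if 0 < u then [Iso k r (u-1)] else [])"
  by (subst Iso.simps) simp

lemma ball2: "(\<forall>x\<in>{x. (P \<and> x = a) \<or> (Q \<and> x = b)}. R x) = ((P \<longrightarrow> R a) \<and> (Q \<longrightarrow> R b))"
  by auto

lemma Iso_le: "game_le (Iso k r u) (Iso k' r' u') \<longleftrightarrow>
   (int k - int r < int k' - int r' \<or> (int k - int r = int k' - int r' \<and> even u = even u'))"
proof (induction "k+r+u+k'+r'+u'" arbitrary: k r u k' r' u' rule: less_induct)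
  case less
  have IH: "\<And>a b c d e f. a+b+c+d+e+f < k+r+u+k'+r'+u' \<Longrightarrow> game_le (Iso a b c) (Iso d e f) \<longleftrightarrow>
     (int a - int b < int d - int e \<or> (int a - int b = int d - int e \<and> even c = even f))"
    using less by blast
  have h1: "0 < k \<Longrightarrow> game_le (Iso k' r' u') (Iso (k-1) r u) \<longleftrightarrow>
     (int k' - int r' < int (k-1) - int r \<or> (int k' - int r' = int (k-1) - int r \<and> even u' = even u))"
    by (rule IH) simp
  have h2: "0 < u \<Longrightarrow> game_le (Iso k' r' u') (Iso k r (u-1)) \<longleftrightarrow>
     (int k' - int r' < int k - int r \<or> (int k' - int r' = int k - int r \<and> even u' = even (u-1)))"
    by (rule IH) simp
  have h3: "0 < r' \<Longrightarrow> game_le (Iso k' (r'-1) u') (Iso k r u) \<longleftrightarrow>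
     (int k' - int (r'-1) < int k - int r \<or> (int k' - int (r'-1) = int k - int r \<and> even u' = even u))"
    by (rule IH) simp
  have h4: "0 < u' \<Longrightarrow> game_le (Iso k' r' (u'-1)) (Iso k r u) \<longleftrightarrow>
     (int k' - int r' < int k - int r \<or> (int k' - int r' = int k - int r \<and> even (u'-1) = even u))"
    by (rule IH) simp
  show ?case
    apply (subst le_unfold)
    apply (simp only: lopts_Iso ropts_Iso set_if)
    apply (simp only: ball2)
    apply (cases "0 < k"; cases "0 < u"; cases "0 < r'"; cases "0 < u'")
    apply (simp_all only: h1 h2 h3 h4 simp_thms)
    apply (simp_all del: of_nat_diff add: of_nat_diff)
    apply presburger+
    done
qed



fun BSg :: "nat \<Rightarrow> nat \<Rightarrow> game" where
  "BSg a c = Game ([Iso a 0 c] @ (if 0 < a then [BSg (a-1) c] else []) @ (if 0 < c then [BSg a (c-1)] else []))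
                  ((if 0 < a then [Iso 0 0 (a-1+c)] else []) @ (if 0 < c then [BSg a (c-1)] else []))"
declare BSg.simps[simp del]

lemma lopts_BSg: "lopts (BSg a c) = [Iso a 0 c] @ (if 0 < a then [BSg (a-1) c] else []) @ (if 0 < c then [BSg a (c-1)] else [])"
  by (subst BSg.simps) simp
lemma ropts_BSg: "ropts (BSg a c) = (if 0 < a then [Iso 0 0 (a-1+c)] else []) @ (if 0 < c then [BSg a (c-1)] else [])"
  by (subst BSg.simps) simp

fun Pg :: "nat \<Rightarrow> nat \<Rightarrow> game" where
  "Pg a b = Game ([Iso a 0 b] @ (if 0 < a then [Pg (a-1) b] else []) @ (if 0 < b then [BSg a (b-1)] else []))
                 ([Iso 0 b a] @ (if 0 < b then [Pg a (b-1)] else []) @ (if 0 < a then [game_neg (BSg b (a-1))] else []))"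
declare Pg.simps[simp del]

lemma lopts_Pg: "lopts (Pg a b) = [Iso a 0 b] @ (if 0 < a then [Pg (a-1) b] else []) @ (if 0 < b then [BSg a (b-1)] else [])"
  by (subst Pg.simps) simp
lemma ropts_Pg: "ropts (Pg a b) = [Iso 0 b a] @ (if 0 < b then [Pg a (b-1)] else []) @ (if 0 < a then [game_neg (BSg b (a-1))] else [])"
  by (subst Pg.simps) simp

lemma neg_Pg: "game_neg (Pg a b) = Pg b a"
proof (induction "a+b" arbitrary: a b rule: less_induct)
  case less
  have IH: "\<And>x y. x+y < a+b \<Longrightarrow> game_neg (Pg x y) = Pg y x"
    using less by blast
  show ?case by (subst (1 2) Pg.simps) (simp add: IH neg_Iso)
qed

lemma ropt_le_not: "hr \<in> set (ropts G) \<Longrightarrow> game_le hr X \<Longrightarrow> \<not> game_le X G"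
  by (subst le_unfold) blast

lemma BSg0: "game_eq (BSg 0 c) (Iso 1 0 c)"
proof (induction c)
  case 0
  then show ?case by (rule eq_by_corr2) (auto simp: eq_refl lopts_BSg ropts_BSg lopts_Iso ropts_Iso)
next
  case (Suc c)
  show ?case
    by (rule eq_by_corr2) (use Suc in \<open>auto simp: eq_refl lopts_BSg ropts_BSg lopts_Iso ropts_Iso\<close>)
qed

lemma BSg_le: "1 \<le> a \<Longrightarrow> game_le (BSg a c) (Iso a 0 (c+1))"
proof (induction "a+c" arbitrary: a c rule: less_induct)
  case less
  show ?case
  proof (subst le_unfold, intro conjI ballI)
    fix gl assume gl: "gl \<in> set (lopts (BSg a c))"
    show "\<not> game_le (Iso a 0 (c + 1)) gl"
    proof
      assume h: "game_le (Iso a 0 (c + 1)) gl"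
      from gl consider "gl = Iso a 0 c" | "0 < a" "gl = BSg (a-1) c" | "0 < c" "gl = BSg a (c-1)"
        by (auto simp: lopts_BSg split: if_splits)
      then show False
      proof cases
        case 1 then show False using h by (simp add: Iso_le)
      next
        case 2
        show False
        proof (cases "a = 1")
          case True
          then have "game_le (Iso a 0 (c+1)) (Iso 1 0 c)" using h 2 BSg0[of c] game_le_trans
            unfolding game_eq_def by auto
          then show False using True by (simp add: Iso_le)
        next
          case False
          then have "game_le gl (Iso (a-1) 0 (c+1))" using less 2 by simp
          then have "game_le (Iso a 0 (c+1)) (Iso (a-1) 0 (c+1))" using h game_le_trans by blast
          then show False using less.prems by (simp add: Iso_le)
        qed
      next
        case 3
        then have "game_le gl (Iso a 0 (c-1+1))" using less.hyps[of a "c-1"] less.prems by simp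
        then have "game_le (Iso a 0 (c+1)) (Iso a 0 c)" using h game_le_trans 3 by auto
        then show False by (simp add: Iso_le)
      qed
    qed
  next
    fix hr assume hr: "hr \<in> set (ropts (Iso a 0 (c+1)))"
    then have hr': "hr = Iso a 0 c" by (simp add: ropts_Iso)
    have "Iso 0 0 (a-1+c) \<in> set (ropts (BSg a c))" using less.prems by (simp add: ropts_BSg)
    moreover have "game_le (Iso 0 0 (a-1+c)) (Iso a 0 c)" using less.prems by (simp add: Iso_le)
    ultimately show "\<not> game_le hr (BSg a c)" unfolding hr' by (rule ropt_le_not)
  qed
qed

lemma Pg_le: "game_le (Pg a b) (Iso (a+1) 0 b)"
proof (induction "a+b" arbitrary: a b rule: less_induct)
  case less
  show ?case
  proof (subst le_unfold, intro conjI ballI)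
    fix gl assume gl: "gl \<in> set (lopts (Pg a b))"
    show "\<not> game_le (Iso (a+1) 0 b) gl"
    proof
      assume h: "game_le (Iso (a+1) 0 b) gl"
      from gl consider "gl = Iso a 0 b" | "0 < a" "gl = Pg (a-1) b" | "0 < b" "gl = BSg a (b-1)"
        by (auto simp: lopts_Pg split: if_splits)
      then show False
      proof cases
        case 1 then show False using h by (simp add: Iso_le)
      next
        case 2
        then have "game_le gl (Iso (a-1+1) 0 b)" using less.hyps[of "a-1" b] by simp
        then have "game_le (Iso (a+1) 0 b) (Iso a 0 b)" using h game_le_trans 2 by auto
        then show False by (simp add: Iso_le)
      next
        case 3
        show False
        proof (cases "a = 0")
          case True
          then have "game_le (Iso (a+1) 0 b) (Iso 1 0 (b-1))" using h 3 BSg0[of "b-1"] game_le_trans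
            unfolding game_eq_def by auto
          then show False using True 3 by (simp add: Iso_le)
        next
          case False
          then have "game_le gl (Iso a 0 (b-1+1))" using BSg_le[of a "b-1"] 3 by simp
          then have "game_le (Iso (a+1) 0 b) (Iso a 0 b)" using h game_le_trans 3 by auto
          then show False by (simp add: Iso_le)
        qed
      qed
    qed
  next
    fix hr assume hr: "hr \<in> set (ropts (Iso (a+1) 0 b))"
    then have hr': "hr = Iso (a+1) 0 (b-1)" by (simp add: ropts_Iso split: if_splits)
    have "Iso 0 b a \<in> set (ropts (Pg a b))" by (simp add: ropts_Pg)
    moreover have "game_le (Iso 0 b a) hr" unfolding hr' by (simp add: Iso_le)
    ultimately show "\<not> game_le hr (Pg a b)" by (rule ropt_le_not)
  qed
qed

lemma Pg_main:
  assumes "1 \<le> n"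
  shows "game_eq (Pg n n) (Game [Iso n 0 n] [Iso 0 n n])"
proof -
  have A: "\<forall>x\<in>set (lopts (Pg n n)). game_le x (Iso n 0 n)"
  proof
    fix x assume "x \<in> set (lopts (Pg n n))"
    then consider "x = Iso n 0 n" | "x = Pg (n-1) n" | "x = BSg n (n-1)"
      using assms by (auto simp: lopts_Pg split: if_splits)
    then show "game_le x (Iso n 0 n)"
    proof cases
      case 1 then show ?thesis by (simp add: game_le_refl)
    next
      case 2 then show ?thesis using Pg_le[of "n-1" n] assms by simp
    next
      case 3 then show ?thesis using BSg_le[of n "n-1"] assms by simp
    qed
  qed
  have B: "\<forall>x\<in>set (ropts (Pg n n)). game_le (Iso 0 n n) x"
  proof
    fix x assume "x \<in> set (ropts (Pg n n))"
    then consider "x = Iso 0 n n" | "x = Pg n (n-1)" | "x = game_neg (BSg n (n-1))"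
      using assms by (auto simp: ropts_Pg split: if_splits)
    then show "game_le (Iso 0 n n) x"
    proof cases
      case 1 then show ?thesis by (simp add: game_le_refl)
    next
      case 2
      have "game_le (Pg (n-1) n) (Iso n 0 n)" using Pg_le[of "n-1" n] assms by simp
      then have "game_le (game_neg (Iso n 0 n)) (game_neg (Pg (n-1) n))" by (simp add: le_neg)
      then show ?thesis using 2 by (simp add: neg_Iso neg_Pg)
    next
      case 3
      have "game_le (BSg n (n-1)) (Iso n 0 n)" using BSg_le[of n "n-1"] assms by simp
      then have "game_le (game_neg (Iso n 0 n)) (game_neg (BSg n (n-1)))" by (simp add: le_neg)
      then show ?thesis using 3 by (simp add: neg_Iso)
    qed
  qed
  have L1: "Iso n 0 n \<in> set (lopts (Pg n n))" by (simp add: lopts_Pg)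
  have R1: "Iso 0 n n \<in> set (ropts (Pg n n))" by (simp add: ropts_Pg)
  obtain PL PR where P: "Pg n n = Game PL PR" by (cases "Pg n n")
  show ?thesis unfolding game_eq_def P
  proof
    show "game_le (Game PL PR) (Game [Iso n 0 n] [Iso 0 n n])"
    proof (rule le_by_corr)
      show "\<forall>x\<in>set PL. \<exists>y\<in>set [Iso n 0 n]. game_le x y" using A P by simp
      show "\<forall>y\<in>set [Iso 0 n n]. \<exists>x\<in>set PR. game_le x y" using R1 P game_le_refl by auto
    qed
    show "game_le (Game [Iso n 0 n] [Iso 0 n n]) (Game PL PR)"
    proof (rule le_by_corr)
      show "\<forall>y\<in>set PR. \<exists>x\<in>set [Iso 0 n n]. game_le x y" using B P by simp
      show "\<forall>x\<in>set [Iso n 0 n]. \<exists>y\<in>set PL. game_le x y" using L1 P game_le_refl by auto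
    qed
  qed
qed

lemma add_zero: "game_add g game_zero = g"
  by (induction g) (auto simp: game_zero_def intro: map_idI)

lemma nat_Iso: "game_nat n = Iso n 0 0"
  by (induction n) (subst Iso.simps; simp add: game_zero_def)+

lemma add_star1: "game_add (Iso n 0 0) game_star = Iso n 0 1"
proof (induction n)
  case 0 then show ?case
    by (simp add: game_star_def game_zero_def Iso.simps)
next
  case (Suc n) then show ?case
    apply (subst Iso.simps, subst (2) Iso.simps)
    apply (simp add: game_star_def add_zero[unfolded game_zero_def])
    apply (simp add: Iso.simps[of "Suc n" 0 "Suc 0"] Iso.simps[of 0 "Suc n" "Suc 0"] Iso.simps[of "Suc n" 0 0] Iso.simps[of 0 "Suc n" 0] add_zero)
    done
qed

lemma add_star2: "game_add (Iso 0 n 0) game_star = Iso 0 n 1"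
proof (induction n)
  case 0 then show ?case
    by (simp add: game_star_def game_zero_def Iso.simps)
next
  case (Suc n) then show ?case
    apply (subst Iso.simps, subst (2) Iso.simps)
    apply (simp add: game_star_def add_zero[unfolded game_zero_def])
    apply (simp add: Iso.simps[of "Suc n" 0 "Suc 0"] Iso.simps[of 0 "Suc n" "Suc 0"] Iso.simps[of "Suc n" 0 0] Iso.simps[of 0 "Suc n" 0] add_zero)
    done
qed



definition cnt :: "tint \<Rightarrow> nat set \<Rightarrow> (nat \<Rightarrow> tint) \<Rightarrow> nat" where
  "cnt c V t = card {u\<in>V. t u = c}"

abbreviation opt where
  "opt p f V E t v \<equiv> snort_aux f (move_V p V E t v) E (move_t p V E t v)"

lemma snort_lopts: "finite V \<Longrightarrow> set (lopts (snort_aux (Suc f) V E t)) =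
   (\<lambda>v. opt Left f V E t v) ` {v\<in>V. t v \<noteq> Red}"
  by (simp add: can_move_def)

lemma snort_ropts: "finite V \<Longrightarrow> set (ropts (snort_aux (Suc f) V E t)) =
   (\<lambda>v. opt Right f V E t v) ` {v\<in>V. t v \<noteq> Blue}"
  by (simp add: can_move_def)

lemma card_move: "finite V \<Longrightarrow> v \<in> V \<Longrightarrow> card (move_V p V E t v) < card V"
proof -
  assume a: "finite V" "v \<in> V"
  have "move_V p V E t v \<subseteq> V - {v}" by (auto simp: move_V_def)
  then have "card (move_V p V E t v) \<le> card (V - {v})" using a by (intro card_mono) auto
  also have "\<dots> < card V" by (rule card_Diff1_less[OF a])
  finally show ?thesis .
qed

lemma snort_zero: "finite V \<Longrightarrow> card V \<le> 0 \<Longrightarrow> snort_aux f V E t = Game [] []"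
  by (cases f) simp_all

lemma Iso000: "Iso 0 0 0 = Game [] []" by (subst Iso.simps) simp

lemma cnt_remove: "finite V \<Longrightarrow> v \<in> V \<Longrightarrow> cnt c (V - {v}) t = (if t v = c then cnt c V t - 1 else cnt c V t)"
  unfolding cnt_def
proof -
  assume "finite V" "v \<in> V"
  have "{u \<in> V - {v}. t u = c} = {u\<in>V. t u = c} - {v}" by auto
  then show "card {u \<in> V - {v}. t u = c} = (if t v = c then card {u \<in> V. t u = c} - 1 else card {u \<in> V. t u = c})"
    using \<open>finite V\<close> \<open>v \<in> V\<close> by (simp add: card_Diff_singleton_if)
qed

lemma cnt_pos: "finite V \<Longrightarrow> 0 < cnt c V t \<Longrightarrow> \<exists>v\<in>V. t v = c"
  unfolding cnt_def by (metis (mono_tags, lifting) card.empty empty_Collect_eq less_irrefl)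

lemma snort_iso:
  "finite V \<Longrightarrow> card V \<le> f \<Longrightarrow> (\<forall>v\<in>V. nbrs V E v = {}) \<Longrightarrow>
   game_eq (snort_aux f V E t) (Iso (cnt Blue V t) (cnt Red V t) (cnt Untinted V t))"
proof (induction f arbitrary: V)
  case 0
  then have "V = {}" by simp
  then show ?case by (simp add: cnt_def Iso000 eq_refl)
next
  case (Suc f)
  have mv: "\<And>p v. v \<in> V \<Longrightarrow> move_V p V E t v = V - {v}"
    using Suc.prems(3) by (simp add: move_V_def)
  have mt: "\<And>p v. v \<in> V \<Longrightarrow> move_t p V E t v = t"
    using Suc.prems(3) by (simp add: move_t_def)
  have IH: "\<And>p v. v \<in> V \<Longrightarrow> game_eq (opt p f V E t v)
       (Iso (cnt Blue (V-{v}) t) (cnt Red (V-{v}) t) (cnt Untinted (V-{v}) t))"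
  proof -
    fix p v assume v: "v \<in> V"
    have "\<forall>w\<in>V-{v}. nbrs (V-{v}) E w = {}" using Suc.prems(3) by (auto simp: nbrs_def)
    moreover have "card (V - {v}) \<le> f" using Suc.prems(1,2) v by (simp add: card_Diff_singleton)
    moreover have "finite (V - {v})" using Suc.prems(1) by simp
    ultimately show "game_eq (opt p f V E t v)
       (Iso (cnt Blue (V-{v}) t) (cnt Red (V-{v}) t) (cnt Untinted (V-{v}) t))"
      using Suc.IH[of "V-{v}"] mv[OF v] mt[OF v] by simp
  qed
  let ?k = "cnt Blue V t" and ?r = "cnt Red V t" and ?u = "cnt Untinted V t"
  have pos: "\<And>v c. v \<in> V \<Longrightarrow> t v = c \<Longrightarrow> 0 < cnt c V t"
  proof -
    fix v c assume "v \<in> V" "t v = c"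
    then have "v \<in> {u\<in>V. t u = c}" by simp
    moreover have "finite {u\<in>V. t u = c}" using Suc.prems(1) by simp
    ultimately show "0 < cnt c V t" unfolding cnt_def using card_gt_0_iff by blast
  qed
  show ?case
  proof (rule eq_by_corr2)
    show "\<forall>x\<in>set (lopts (snort_aux (Suc f) V E t)). \<exists>y\<in>set (lopts (Iso ?k ?r ?u)). game_eq x y"
    proof
      fix x assume "x \<in> set (lopts (snort_aux (Suc f) V E t))"
      then obtain v where v: "v \<in> V" "t v \<noteq> Red" "x = opt Left f V E t v"
        using snort_lopts[OF Suc.prems(1)] by auto
      show "\<exists>y\<in>set (lopts (Iso ?k ?r ?u)). game_eq x y"
        using IH[OF v(1), of Left] v pos[OF v(1)] cnt_remove[OF Suc.prems(1) v(1)]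
        by (cases "t v") (simp_all add: lopts_Iso)
    qed
    show "\<forall>x\<in>set (ropts (snort_aux (Suc f) V E t)). \<exists>y\<in>set (ropts (Iso ?k ?r ?u)). game_eq x y"
    proof
      fix x assume "x \<in> set (ropts (snort_aux (Suc f) V E t))"
      then obtain v where v: "v \<in> V" "t v \<noteq> Blue" "x = opt Right f V E t v"
        using snort_ropts[OF Suc.prems(1)] by auto
      show "\<exists>y\<in>set (ropts (Iso ?k ?r ?u)). game_eq x y"
        using IH[OF v(1), of Right] v pos[OF v(1)] cnt_remove[OF Suc.prems(1) v(1)]
        by (cases "t v") (simp_all add: ropts_Iso)
    qed
    show "\<forall>y\<in>set (lopts (Iso ?k ?r ?u)). \<exists>x\<in>set (lopts (snort_aux (Suc f) V E t)). game_eq x y"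
    proof
      fix y assume y: "y \<in> set (lopts (Iso ?k ?r ?u))"
      then obtain c where c: "c = Blue \<or> c = Untinted" "0 < cnt c V t"
        "y = Iso (if c = Blue then ?k - 1 else ?k) ?r (if c = Untinted then ?u - 1 else ?u)"
      proof -
        from y consider "0 < ?k" "y = Iso (?k - 1) ?r ?u" | "0 < ?u" "y = Iso ?k ?r (?u - 1)"
          by (auto simp: lopts_Iso split: if_splits)
        then show thesis
        proof cases
          case 1 show thesis by (rule that[of Blue]) (use 1 in \<open>auto simp: cnt_def\<close>)
        next
          case 2 show thesis by (rule that[of Untinted]) (use 2 in \<open>auto simp: cnt_def\<close>)
        qed
      qed
      then obtain v where v: "v \<in> V" "t v = c" using cnt_pos[OF Suc.prems(1)] by blast
      have "opt Left f V E t v \<in> set (lopts (snort_aux (Suc f) V E t))"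
        using snort_lopts[OF Suc.prems(1)] v c by auto
      moreover have "game_eq (opt Left f V E t v) y"
        using IH[OF v(1), of Left] v c cnt_remove[OF Suc.prems(1) v(1)] by auto
      ultimately show "\<exists>x\<in>set (lopts (snort_aux (Suc f) V E t)). game_eq x y" by blast
    qed
    show "\<forall>y\<in>set (ropts (Iso ?k ?r ?u)). \<exists>x\<in>set (ropts (snort_aux (Suc f) V E t)). game_eq x y"
    proof
      fix y assume y: "y \<in> set (ropts (Iso ?k ?r ?u))"
      then obtain c where c: "c = Red \<or> c = Untinted" "0 < cnt c V t"
        "y = Iso ?k (if c = Red then ?r - 1 else ?r) (if c = Untinted then ?u - 1 else ?u)"
      proof -
        from y consider "0 < ?r" "y = Iso ?k (?r - 1) ?u" | "0 < ?u" "y = Iso ?k ?r (?u - 1)"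
          by (auto simp: ropts_Iso split: if_splits)
        then show thesis
        proof cases
          case 1 show thesis by (rule that[of Red]) (use 1 in \<open>auto simp: cnt_def\<close>)
        next
          case 2 show thesis by (rule that[of Untinted]) (use 2 in \<open>auto simp: cnt_def\<close>)
        qed
      qed
      then obtain v where v: "v \<in> V" "t v = c" using cnt_pos[OF Suc.prems(1)] by blast
      have "opt Right f V E t v \<in> set (ropts (snort_aux (Suc f) V E t))"
        using snort_ropts[OF Suc.prems(1)] v c by auto
      moreover have "game_eq (opt Right f V E t v) y"
        using IH[OF v(1), of Right] v c cnt_remove[OF Suc.prems(1) v(1)] by auto
      ultimately show "\<exists>x\<in>set (ropts (snort_aux (Suc f) V E t)). game_eq x y" by blast
    qed
  qed
qed



definition L0 :: "nat \<Rightarrow> nat set" where "L0 n = {2..n+1}"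
definition L1 :: "nat \<Rightarrow> nat set" where "L1 n = {n+2..2*n+1}"

lemma nb_L0: "v \<in> L0 n \<Longrightarrow> nbrs V (dstar_E n) v = V \<inter> {0}"
  by (auto simp: nbrs_def dstar_E_def L0_def)
lemma nb_L1: "v \<in> L1 n \<Longrightarrow> nbrs V (dstar_E n) v = V \<inter> {1}"
  by (auto simp: nbrs_def dstar_E_def L1_def)
lemma nb_0: "nbrs V (dstar_E n) 0 = V \<inter> ({1} \<union> L0 n)"
  by (auto simp: nbrs_def dstar_E_def L0_def)
lemma nb_1: "nbrs V (dstar_E n) 1 = V \<inter> ({0} \<union> L1 n)"
  by (auto simp: nbrs_def dstar_E_def L1_def)

lemma V_cases: "V \<subseteq> dstar_V n \<Longrightarrow> v \<in> V \<Longrightarrow> v = 0 \<or> v = 1 \<or> v \<in> L0 n \<or> v \<in> L1 n"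
  by (auto simp: dstar_V_def L0_def L1_def)

lemma L_facts: "0 \<notin> L0 n" "1 \<notin> L0 n" "0 \<notin> L1 n" "1 \<notin> L1 n" "v \<in> L0 n \<Longrightarrow> v \<notin> L1 n"
  "v \<in> L0 n \<Longrightarrow> v \<noteq> 0" "v \<in> L0 n \<Longrightarrow> v \<noteq> 1" "v \<in> L1 n \<Longrightarrow> v \<noteq> 0" "v \<in> L1 n \<Longrightarrow> v \<noteq> 1"
  by (auto simp: L0_def L1_def)

lemma fin_V: "V \<subseteq> dstar_V n \<Longrightarrow> finite V"
  using finite_subset by (auto simp: dstar_V_def)

lemma card_rm: "finite V \<Longrightarrow> card ((V - {v}) \<inter> L) = (if v \<in> V \<inter> L then card (V \<inter> L) - 1 else card (V \<inter> L))"
proof -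
  assume f: "finite V"
  have "(V - {v}) \<inter> L = (V \<inter> L) - {v}" by auto
  then show ?thesis using f by (simp add: card_Diff_singleton_if)
qed

lemma card_pos: "finite V \<Longrightarrow> v \<in> V \<inter> L \<Longrightarrow> 0 < card (V \<inter> L)"
  by (subst card_gt_0_iff) auto

lemma card_ex: "0 < card (V \<inter> L) \<Longrightarrow> \<exists>v. v \<in> V \<inter> L"
  by (metis card.empty ex_in_conv less_irrefl)

lemma iso_cond: "V \<inter> {0, 1} = {} \<Longrightarrow> V \<subseteq> dstar_V n \<Longrightarrow> \<forall>w\<in>V. nbrs V (dstar_E n) w = {}"
proof
  fix w assume a: "V \<inter> {0, 1} = {}" "V \<subseteq> dstar_V n" "w \<in> V"
  then have "0 \<notin> V" "1 \<notin> V" by auto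
  then show "nbrs V (dstar_E n) w = {}"
    using V_cases[OF a(2,3)] a(3) nb_L0[of w n V] nb_L1[of w n V] by auto
qed

lemma card_3: "V \<subseteq> dstar_V n \<Longrightarrow> 0 \<in> V \<Longrightarrow> 1 \<notin> V \<Longrightarrow> card V = 1 + card (V \<inter> L0 n) + card (V \<inter> L1 n)"
proof -
  assume a: "V \<subseteq> dstar_V n" "0 \<in> V" "1 \<notin> V"
  have fV: "finite V" using fin_V[OF a(1)] .
  have e: "V = insert 0 ((V \<inter> L0 n) \<union> (V \<inter> L1 n))"
  proof
    show "V \<subseteq> insert 0 ((V \<inter> L0 n) \<union> (V \<inter> L1 n))"
      using a V_cases[OF a(1)] by blast
    show "insert 0 ((V \<inter> L0 n) \<union> (V \<inter> L1 n)) \<subseteq> V" using a by blast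
  qed
  have d: "(V \<inter> L0 n) \<inter> (V \<inter> L1 n) = {}" using L_facts(5) by blast
  have n0: "0 \<notin> (V \<inter> L0 n) \<union> (V \<inter> L1 n)" using L_facts(1,3) by blast
  have "card V = Suc (card ((V \<inter> L0 n) \<union> (V \<inter> L1 n)))"
    by (subst e, rule card_insert_disjoint) (use fV n0 in auto)
  also have "card ((V \<inter> L0 n) \<union> (V \<inter> L1 n)) = card (V \<inter> L0 n) + card (V \<inter> L1 n)"
    by (rule card_Un_disjoint) (use fV d in auto)
  finally show ?thesis by simp
qed

definition clsB :: "nat \<Rightarrow> nat set \<Rightarrow> (nat \<Rightarrow> tint) \<Rightarrow> bool" where
  "clsB n V t \<longleftrightarrow> V \<subseteq> dstar_V n \<and> 0 \<in> V \<and> 1 \<notin> V \<and> t 0 = Blue \<and> (\<forall>u\<in>V. u \<noteq> 0 \<longrightarrow> t u = Untinted)"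

lemma clsB_cases: "clsB n V t \<Longrightarrow> v \<in> V \<Longrightarrow> v = 0 \<or> v \<in> V \<inter> L0 n \<or> v \<in> V \<inter> L1 n"
  unfolding clsB_def using V_cases by blast

lemma snort_BS:
  "card V \<le> f \<Longrightarrow> clsB n V t \<Longrightarrow>
   game_eq (snort_aux f V (dstar_E n) t) (BSg (card (V \<inter> L0 n)) (card (V \<inter> L1 n)))"
proof (induction f arbitrary: V t)
  case 0
  then have "finite V" "0 \<in> V" using fin_V by (auto simp: clsB_def)
  then have "card V > 0" using card_gt_0_iff by blast
  then show ?case using 0 by simp
next
  case (Suc f)
  let ?E = "dstar_E n"
  let ?a = "card (V \<inter> L0 n)" and ?c = "card (V \<inter> L1 n)"
  have cl: "V \<subseteq> dstar_V n" "0 \<in> V" "1 \<notin> V" "t 0 = Blue" "\<And>u. u \<in> V \<Longrightarrow> u \<noteq> 0 \<Longrightarrow> t u = Untinted"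
    using Suc.prems(2) by (auto simp: clsB_def)
  have fV: "finite V" using fin_V[OF cl(1)] .
  have cV: "card V = 1 + ?a + ?c" using card_3[OF cl(1-3)] .
  have L_0: "game_eq (opt Left f V ?E t 0) (Iso ?a 0 ?c)"
  proof -
    have nb: "nbrs V ?E 0 = V \<inter> L0 n" using nb_0[of V n] cl(3) by auto
    have mV: "move_V Left V ?E t 0 = V - {0}"
      unfolding move_V_def nb using cl(5) L_facts by auto
    define t' where "t' = move_t Left V ?E t 0"
    have t': "\<And>u. t' u = (if u \<in> V \<inter> L0 n then Blue else t u)"
      unfolding t'_def move_t_def nb by simp
    have "game_eq (snort_aux f (V - {0}) ?E t') (Iso (cnt Blue (V-{0}) t') (cnt Red (V-{0}) t') (cnt Untinted (V-{0}) t'))"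
    proof (rule snort_iso)
      show "finite (V - {0})" using fV by simp
      show "card (V - {0}) \<le> f" using Suc.prems(1) cl(2) fV by (simp add: card_Diff_singleton)
      show "\<forall>v\<in>V - {0}. nbrs (V - {0}) ?E v = {}"
        by (rule iso_cond) (use cl in auto)
    qed
    moreover have "cnt Blue (V - {0}) t' = ?a"
    proof -
      have "{u \<in> V - {0}. t' u = Blue} = V \<inter> L0 n"
        using t' cl(2,3,5) V_cases[OF cl(1)] L_facts by auto
      then show ?thesis by (simp add: cnt_def)
    qed
    moreover have "cnt Red (V - {0}) t' = 0"
    proof -
      have "{u \<in> V - {0}. t' u = Red} = {}"
        using t' cl(2,3,5) V_cases[OF cl(1)] L_facts by auto
      then show ?thesis unfolding cnt_def by (metis card.empty)
    qed
    moreover have "cnt Untinted (V - {0}) t' = ?c"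
    proof -
      have "{u \<in> V - {0}. t' u = Untinted} = V \<inter> L1 n"
        using t' cl(2,3,5) V_cases[OF cl(1)] L_facts by auto
      then show ?thesis by (simp add: cnt_def)
    qed
    moreover have "opt Left f V ?E t 0 = snort_aux f (V - {0}) ?E t'" using mV t'_def by simp
    ultimately show ?thesis by simp
  qed
  have L_L0: "v \<in> V \<inter> L0 n \<Longrightarrow> game_eq (opt Left f V ?E t v) (BSg (?a - 1) ?c)" for v
  proof -
    assume v: "v \<in> V \<inter> L0 n"
    have nb: "nbrs V ?E v = {0}" using nb_L0[of v n V] v cl(2) by auto
    have mV: "move_V Left V ?E t v = V - {v}"
      unfolding move_V_def nb using cl(4) by auto
    define t' where "t' = move_t Left V ?E t v"
    have t': "\<And>u. t' u = (if u = 0 then Blue else t u)"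
      unfolding t'_def move_t_def nb by simp
    have "clsB n (V - {v}) t'" using cl t' v L_facts(6)[of v n] unfolding clsB_def by auto
    moreover have "card (V - {v}) \<le> f" using Suc.prems(1) v fV by (simp add: card_Diff_singleton)
    ultimately have "game_eq (snort_aux f (V - {v}) ?E t') (BSg (card ((V - {v}) \<inter> L0 n)) (card ((V - {v}) \<inter> L1 n)))"
      using Suc.IH by blast
    then show ?thesis using mV t'_def card_rm[OF fV, of v] v L_facts(5) by simp
  qed
  have L_L1: "v \<in> V \<inter> L1 n \<Longrightarrow> game_eq (opt Left f V ?E t v) (BSg ?a (?c - 1))" for v
  proof -
    assume v: "v \<in> V \<inter> L1 n"
    have nb: "nbrs V ?E v = {}" using nb_L1[of v n V] v cl(3) by auto
    have mV: "move_V Left V ?E t v = V - {v}"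
      unfolding move_V_def nb by auto
    have mt: "move_t Left V ?E t v = t"
      unfolding move_t_def nb by simp
    have "clsB n (V - {v}) t" using cl v L_facts unfolding clsB_def by auto
    moreover have "card (V - {v}) \<le> f" using Suc.prems(1) v fV by (simp add: card_Diff_singleton)
    ultimately have "game_eq (snort_aux f (V - {v}) ?E t) (BSg (card ((V - {v}) \<inter> L0 n)) (card ((V - {v}) \<inter> L1 n)))"
      using Suc.IH by blast
    moreover have "v \<notin> L0 n" using L_facts(5)[of v n] v by blast
    ultimately show ?thesis using mV mt card_rm[OF fV, of v] v by simp
  qed
  have R_L1: "v \<in> V \<inter> L1 n \<Longrightarrow> game_eq (opt Right f V ?E t v) (BSg ?a (?c - 1))" for v
  proof -
    assume v: "v \<in> V \<inter> L1 n"
    have nb: "nbrs V ?E v = {}" using nb_L1[of v n V] v cl(3) by auto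
    have mV: "move_V Right V ?E t v = V - {v}"
      unfolding move_V_def nb by auto
    have mt: "move_t Right V ?E t v = t"
      unfolding move_t_def nb by simp
    have "clsB n (V - {v}) t" using cl v L_facts unfolding clsB_def by auto
    moreover have "card (V - {v}) \<le> f" using Suc.prems(1) v fV by (simp add: card_Diff_singleton)
    ultimately have "game_eq (snort_aux f (V - {v}) ?E t) (BSg (card ((V - {v}) \<inter> L0 n)) (card ((V - {v}) \<inter> L1 n)))"
      using Suc.IH by blast
    moreover have "v \<notin> L0 n" using L_facts(5)[of v n] v by blast
    ultimately show ?thesis using mV mt card_rm[OF fV, of v] v by simp
  qed
  have R_L0: "v \<in> V \<inter> L0 n \<Longrightarrow> game_eq (opt Right f V ?E t v) (Iso 0 0 (?a - 1 + ?c))" for v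
  proof -
    assume v: "v \<in> V \<inter> L0 n"
    have nb: "nbrs V ?E v = {0}" using nb_L0[of v n V] v cl(2) by auto
    have mV: "move_V Right V ?E t v = V - {v} - {0}"
      unfolding move_V_def nb using cl(4) by auto
    define t' where "t' = move_t Right V ?E t v"
    have t': "\<And>u. t' u = (if u = 0 then Red else t u)"
      unfolding t'_def move_t_def nb by simp
    let ?V = "V - {v} - {0}"
    have "game_eq (snort_aux f ?V ?E t') (Iso (cnt Blue ?V t') (cnt Red ?V t') (cnt Untinted ?V t'))"
    proof (rule snort_iso)
      show "finite ?V" using fV by simp
      have "card ?V < card V" using card_move[OF fV, of v Right ?E t] mV v by simp
      then show "card ?V \<le> f" using Suc.prems(1) by simp
      show "\<forall>w\<in>?V. nbrs ?V ?E w = {}"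
        by (rule iso_cond) (use cl in auto)
    qed
    moreover have "cnt Blue ?V t' = 0"
    proof -
      have "{u \<in> ?V. t' u = Blue} = {}" using t' cl(5) by auto
      then show ?thesis unfolding cnt_def by (metis card.empty)
    qed
    moreover have "cnt Red ?V t' = 0"
    proof -
      have "{u \<in> ?V. t' u = Red} = {}" using t' cl(5) by auto
      then show ?thesis unfolding cnt_def by (metis card.empty)
    qed
    moreover have "cnt Untinted ?V t' = card ?V"
    proof -
      have "{u \<in> ?V. t' u = Untinted} = ?V" using t' cl(5) by auto
      then show ?thesis by (simp add: cnt_def)
    qed
    moreover have "opt Right f V ?E t v = snort_aux f ?V ?E t'" using mV t'_def by simp
    moreover have "card ?V = ?a - 1 + ?c"
    proof -
      have "card ?V = card V - 2" using v cl(2) fV L_facts(6)[of v n]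
        by (simp add: card_Diff_singleton_if)
      moreover have "0 < ?a" using card_pos[OF fV v] .
      ultimately show ?thesis using cV by simp
    qed
    ultimately show ?thesis by simp
  qed
  show ?case
  proof (rule eq_by_corr2)
    show "\<forall>x\<in>set (lopts (snort_aux (Suc f) V ?E t)). \<exists>y\<in>set (lopts (BSg ?a ?c)). game_eq x y"
    proof
      fix x assume "x \<in> set (lopts (snort_aux (Suc f) V ?E t))"
      then obtain v where v: "v \<in> V" "x = opt Left f V ?E t v"
        using snort_lopts[OF fV] by auto
      from clsB_cases[OF Suc.prems(2) v(1)]
      show "\<exists>y\<in>set (lopts (BSg ?a ?c)). game_eq x y"
      proof (elim disjE)
        assume "v = 0" then show ?thesis using L_0 v by (auto simp: lopts_BSg)
      next
        assume h: "v \<in> V \<inter> L0 n" then show ?thesis using L_L0[OF h] v card_pos[OF fV h] by (auto simp: lopts_BSg)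
      next
        assume h: "v \<in> V \<inter> L1 n" then show ?thesis using L_L1[OF h] v card_pos[OF fV h] by (auto simp: lopts_BSg)
      qed
    qed
    show "\<forall>x\<in>set (ropts (snort_aux (Suc f) V ?E t)). \<exists>y\<in>set (ropts (BSg ?a ?c)). game_eq x y"
    proof
      fix x assume "x \<in> set (ropts (snort_aux (Suc f) V ?E t))"
      then obtain v where v: "v \<in> V" "t v \<noteq> Blue" "x = opt Right f V ?E t v"
        using snort_ropts[OF fV] by auto
      from clsB_cases[OF Suc.prems(2) v(1)]
      show "\<exists>y\<in>set (ropts (BSg ?a ?c)). game_eq x y"
      proof (elim disjE)
        assume "v = 0" then show ?thesis using v cl(4) by simp
      next
        assume h: "v \<in> V \<inter> L0 n" then show ?thesis using R_L0[OF h] v card_pos[OF fV h] by (auto simp: ropts_BSg)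
      next
        assume h: "v \<in> V \<inter> L1 n" then show ?thesis using R_L1[OF h] v card_pos[OF fV h] by (auto simp: ropts_BSg)
      qed
    qed
    show "\<forall>y\<in>set (lopts (BSg ?a ?c)). \<exists>x\<in>set (lopts (snort_aux (Suc f) V ?E t)). game_eq x y"
    proof
      fix y assume "y \<in> set (lopts (BSg ?a ?c))"
      then consider "y = Iso ?a 0 ?c" | "0 < ?a" "y = BSg (?a - 1) ?c" | "0 < ?c" "y = BSg ?a (?c - 1)"
        by (auto simp: lopts_BSg split: if_splits)
      then show "\<exists>x\<in>set (lopts (snort_aux (Suc f) V ?E t)). game_eq x y"
      proof cases
        case 1
        have "opt Left f V ?E t 0 \<in> set (lopts (snort_aux (Suc f) V ?E t))"
          using snort_lopts[OF fV] cl(2,4) by auto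
        then show ?thesis using L_0 1 by blast
      next
        case 2
        then obtain v where h: "v \<in> V \<inter> L0 n" using card_ex by blast
        have "opt Left f V ?E t v \<in> set (lopts (snort_aux (Suc f) V ?E t))"
          using snort_lopts[OF fV] cl(5) h L_facts by auto
        then show ?thesis using L_L0[OF h] 2 by blast
      next
        case 3
        then obtain v where h: "v \<in> V \<inter> L1 n" using card_ex by blast
        have "opt Left f V ?E t v \<in> set (lopts (snort_aux (Suc f) V ?E t))"
          using snort_lopts[OF fV] cl(5) h L_facts by auto
        then show ?thesis using L_L1[OF h] 3 by blast
      qed
    qed
    show "\<forall>y\<in>set (ropts (BSg ?a ?c)). \<exists>x\<in>set (ropts (snort_aux (Suc f) V ?E t)). game_eq x y"
    proof
      fix y assume "y \<in> set (ropts (BSg ?a ?c))"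
      then consider "0 < ?a" "y = Iso 0 0 (?a - 1 + ?c)" | "0 < ?c" "y = BSg ?a (?c - 1)"
        by (auto simp: ropts_BSg split: if_splits)
      then show "\<exists>x\<in>set (ropts (snort_aux (Suc f) V ?E t)). game_eq x y"
      proof cases
        case 1
        then obtain v where h: "v \<in> V \<inter> L0 n" using card_ex by blast
        have "opt Right f V ?E t v \<in> set (ropts (snort_aux (Suc f) V ?E t))"
          using snort_ropts[OF fV] cl(5) h L_facts by auto
        then show ?thesis using R_L0[OF h] 1 by blast
      next
        case 2
        then obtain v where h: "v \<in> V \<inter> L1 n" using card_ex by blast
        have "opt Right f V ?E t v \<in> set (ropts (snort_aux (Suc f) V ?E t))"
          using snort_ropts[OF fV] cl(5) h L_facts by auto
        then show ?thesis using R_L1[OF h] 2 by blast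
      qed
    qed
  qed
qed

lemma card_3R: "V \<subseteq> dstar_V n \<Longrightarrow> 1 \<in> V \<Longrightarrow> 0 \<notin> V \<Longrightarrow> card V = 1 + card (V \<inter> L1 n) + card (V \<inter> L0 n)"
proof -
  assume a: "V \<subseteq> dstar_V n" "1 \<in> V" "0 \<notin> V"
  have fV: "finite V" using fin_V[OF a(1)] .
  have e: "V = insert 1 ((V \<inter> L1 n) \<union> (V \<inter> L0 n))"
  proof
    show "V \<subseteq> insert 1 ((V \<inter> L1 n) \<union> (V \<inter> L0 n))"
      using a V_cases[OF a(1)] by blast
    show "insert 1 ((V \<inter> L1 n) \<union> (V \<inter> L0 n)) \<subseteq> V" using a by blast
  qed
  have d: "(V \<inter> L1 n) \<inter> (V \<inter> L0 n) = {}" using L_facts(5) by blast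
  have n0: "1 \<notin> (V \<inter> L1 n) \<union> (V \<inter> L0 n)" using L_facts(2,4) by blast
  have "card V = Suc (card ((V \<inter> L1 n) \<union> (V \<inter> L0 n)))"
    by (subst e, rule card_insert_disjoint) (use fV n0 in auto)
  also have "card ((V \<inter> L1 n) \<union> (V \<inter> L0 n)) = card (V \<inter> L1 n) + card (V \<inter> L0 n)"
    by (rule card_Un_disjoint) (use fV d in auto)
  finally show ?thesis by simp
qed

definition clsR :: "nat \<Rightarrow> nat set \<Rightarrow> (nat \<Rightarrow> tint) \<Rightarrow> bool" where
  "clsR n V t \<longleftrightarrow> V \<subseteq> dstar_V n \<and> 1 \<in> V \<and> 0 \<notin> V \<and> t 1 = Red \<and> (\<forall>u\<in>V. u \<noteq> 1 \<longrightarrow> t u = Untinted)"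

lemma clsR_cases: "clsR n V t \<Longrightarrow> v \<in> V \<Longrightarrow> v = 1 \<or> v \<in> V \<inter> L0 n \<or> v \<in> V \<inter> L1 n"
  unfolding clsR_def using V_cases by blast

lemma lopts_NB: "lopts (game_neg (BSg b c)) = (if 0 < b then [Iso 0 0 (b-1+c)] else []) @ (if 0 < c then [game_neg (BSg b (c-1))] else [])"
  by (subst BSg.simps) (simp add: neg_Iso)
lemma ropts_NB: "ropts (game_neg (BSg b c)) = [Iso 0 b c] @ (if 0 < b then [game_neg (BSg (b-1) c)] else []) @ (if 0 < c then [game_neg (BSg b (c-1))] else [])"
  by (subst BSg.simps) (simp add: neg_Iso)

lemma snort_RS:
  "card V \<le> f \<Longrightarrow> clsR n V t \<Longrightarrow>
   game_eq (snort_aux f V (dstar_E n) t) (game_neg (BSg (card (V \<inter> L1 n)) (card (V \<inter> L0 n))))"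
proof (induction f arbitrary: V t)
  case 0
  then have "finite V" "1 \<in> V" using fin_V by (auto simp: clsR_def)
  then have "card V > 0" using card_gt_0_iff by blast
  then show ?case using 0 by simp
next
  case (Suc f)
  let ?E = "dstar_E n"
  let ?b = "card (V \<inter> L1 n)" and ?c = "card (V \<inter> L0 n)"
  have cl: "V \<subseteq> dstar_V n" "1 \<in> V" "0 \<notin> V" "t 1 = Red" "\<And>u. u \<in> V \<Longrightarrow> u \<noteq> 1 \<Longrightarrow> t u = Untinted"
    using Suc.prems(2) by (auto simp: clsR_def)
  have fV: "finite V" using fin_V[OF cl(1)] .
  have cV: "card V = 1 + ?b + ?c" using card_3R[OF cl(1-3)] .
  have R_1: "game_eq (opt Right f V ?E t 1) (Iso 0 ?b ?c)"
  proof -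
    have nb: "nbrs V ?E 1 = V \<inter> L1 n" using nb_1[of V n] cl(3) by auto
    have mV: "move_V Right V ?E t 1 = V - {1}"
      unfolding move_V_def nb using cl(5) L_facts by auto
    define t' where "t' = move_t Right V ?E t 1"
    have t': "\<And>u. t' u = (if u \<in> V \<inter> L1 n then Red else t u)"
      unfolding t'_def move_t_def nb by simp
    have "game_eq (snort_aux f (V - {1}) ?E t') (Iso (cnt Blue (V-{1}) t') (cnt Red (V-{1}) t') (cnt Untinted (V-{1}) t'))"
    proof (rule snort_iso)
      show "finite (V - {1})" using fV by simp
      show "card (V - {1}) \<le> f" using Suc.prems(1) cl(2) fV by (simp add: card_Diff_singleton)
      show "\<forall>v\<in>V - {1}. nbrs (V - {1}) ?E v = {}"
        by (rule iso_cond) (use cl in auto)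
    qed
    moreover have "cnt Red (V - {1}) t' = ?b"
    proof -
      have "{u \<in> V - {1}. t' u = Red} = V \<inter> L1 n"
        using t' cl(2,3,5) V_cases[OF cl(1)] L_facts by auto
      then show ?thesis by (simp add: cnt_def)
    qed
    moreover have "cnt Blue (V - {1}) t' = 0"
    proof -
      have "{u \<in> V - {1}. t' u = Blue} = {}"
        using t' cl(2,3,5) V_cases[OF cl(1)] L_facts by auto
      then show ?thesis unfolding cnt_def by (metis card.empty)
    qed
    moreover have "cnt Untinted (V - {1}) t' = ?c"
    proof -
      have "{u \<in> V - {1}. t' u = Untinted} = V \<inter> L0 n"
        using t' cl(2,3,5) V_cases[OF cl(1)] L_facts by auto
      then show ?thesis by (simp add: cnt_def)
    qed
    moreover have "opt Right f V ?E t 1 = snort_aux f (V - {1}) ?E t'" using mV t'_def by simp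
    ultimately show ?thesis by simp
  qed
  have R_L1: "v \<in> V \<inter> L1 n \<Longrightarrow> game_eq (opt Right f V ?E t v) (game_neg (BSg (?b - 1) ?c))" for v
  proof -
    assume v: "v \<in> V \<inter> L1 n"
    have nb: "nbrs V ?E v = {1}" using nb_L1[of v n V] v cl(2) by auto
    have mV: "move_V Right V ?E t v = V - {v}"
      unfolding move_V_def nb using cl(4) by auto
    define t' where "t' = move_t Right V ?E t v"
    have t': "\<And>u. t' u = (if u = 1 then Red else t u)"
      unfolding t'_def move_t_def nb by simp
    have "clsR n (V - {v}) t'" using cl t' v L_facts(9)[of v n] unfolding clsR_def by auto
    moreover have "card (V - {v}) \<le> f" using Suc.prems(1) v fV by (simp add: card_Diff_singleton)
    ultimately have "game_eq (snort_aux f (V - {v}) ?E t') (game_neg (BSg (card ((V - {v}) \<inter> L1 n)) (card ((V - {v}) \<inter> L0 n))))"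
      using Suc.IH by blast
    moreover have "v \<notin> L0 n" using L_facts(5)[of v n] v by blast
    ultimately show ?thesis using mV t'_def card_rm[OF fV, of v] v by simp
  qed
  have R_L0: "v \<in> V \<inter> L0 n \<Longrightarrow> game_eq (opt Right f V ?E t v) (game_neg (BSg ?b (?c - 1)))" for v
  proof -
    assume v: "v \<in> V \<inter> L0 n"
    have nb: "nbrs V ?E v = {}" using nb_L0[of v n V] v cl(3) by auto
    have mV: "move_V Right V ?E t v = V - {v}"
      unfolding move_V_def nb by auto
    have mt: "move_t Right V ?E t v = t"
      unfolding move_t_def nb by simp
    have "clsR n (V - {v}) t" using cl v L_facts unfolding clsR_def by auto
    moreover have "card (V - {v}) \<le> f" using Suc.prems(1) v fV by (simp add: card_Diff_singleton)
    ultimately have "game_eq (snort_aux f (V - {v}) ?E t) (game_neg (BSg (card ((V - {v}) \<inter> L1 n)) (card ((V - {v}) \<inter> L0 n))))"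
      using Suc.IH by blast
    moreover have "v \<notin> L1 n" using L_facts(5)[of v n] v by blast
    ultimately show ?thesis using mV mt card_rm[OF fV, of v] v by simp
  qed
  have L_L0: "v \<in> V \<inter> L0 n \<Longrightarrow> game_eq (opt Left f V ?E t v) (game_neg (BSg ?b (?c - 1)))" for v
  proof -
    assume v: "v \<in> V \<inter> L0 n"
    have nb: "nbrs V ?E v = {}" using nb_L0[of v n V] v cl(3) by auto
    have mV: "move_V Left V ?E t v = V - {v}"
      unfolding move_V_def nb by auto
    have mt: "move_t Left V ?E t v = t"
      unfolding move_t_def nb by simp
    have "clsR n (V - {v}) t" using cl v L_facts unfolding clsR_def by auto
    moreover have "card (V - {v}) \<le> f" using Suc.prems(1) v fV by (simp add: card_Diff_singleton)
    ultimately have "game_eq (snort_aux f (V - {v}) ?E t) (game_neg (BSg (card ((V - {v}) \<inter> L1 n)) (card ((V - {v}) \<inter> L0 n))))"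
      using Suc.IH by blast
    moreover have "v \<notin> L1 n" using L_facts(5)[of v n] v by blast
    ultimately show ?thesis using mV mt card_rm[OF fV, of v] v by simp
  qed
  have L_L1: "v \<in> V \<inter> L1 n \<Longrightarrow> game_eq (opt Left f V ?E t v) (Iso 0 0 (?b - 1 + ?c))" for v
  proof -
    assume v: "v \<in> V \<inter> L1 n"
    have nb: "nbrs V ?E v = {1}" using nb_L1[of v n V] v cl(2) by auto
    have mV: "move_V Left V ?E t v = V - {v} - {1}"
      unfolding move_V_def nb using cl(4) by auto
    define t' where "t' = move_t Left V ?E t v"
    have t': "\<And>u. t' u = (if u = 1 then Blue else t u)"
      unfolding t'_def move_t_def nb by simp
    let ?V = "V - {v} - {1}"
    have "game_eq (snort_aux f ?V ?E t') (Iso (cnt Blue ?V t') (cnt Red ?V t') (cnt Untinted ?V t'))"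
    proof (rule snort_iso)
      show "finite ?V" using fV by simp
      have "card ?V < card V" using card_move[OF fV, of v Left ?E t] mV v by simp
      then show "card ?V \<le> f" using Suc.prems(1) by simp
      show "\<forall>w\<in>?V. nbrs ?V ?E w = {}"
        by (rule iso_cond) (use cl in auto)
    qed
    moreover have "cnt Blue ?V t' = 0"
    proof -
      have "{u \<in> ?V. t' u = Blue} = {}" using t' cl(5) by auto
      then show ?thesis unfolding cnt_def by (metis card.empty)
    qed
    moreover have "cnt Red ?V t' = 0"
    proof -
      have "{u \<in> ?V. t' u = Red} = {}" using t' cl(5) by auto
      then show ?thesis unfolding cnt_def by (metis card.empty)
    qed
    moreover have "cnt Untinted ?V t' = card ?V"
    proof -
      have "{u \<in> ?V. t' u = Untinted} = ?V" using t' cl(5) by auto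
      then show ?thesis by (simp add: cnt_def)
    qed
    moreover have "opt Left f V ?E t v = snort_aux f ?V ?E t'" using mV t'_def by simp
    moreover have "card ?V = ?b - 1 + ?c"
    proof -
      have "card ?V = card V - 2" using v cl(2) fV L_facts(9)[of v n]
        by (simp add: card_Diff_singleton_if)
      moreover have "0 < ?b" using card_pos[OF fV v] .
      ultimately show ?thesis using cV by simp
    qed
    ultimately show ?thesis by simp
  qed
  show ?case
  proof (rule eq_by_corr2)
    show "\<forall>x\<in>set (ropts (snort_aux (Suc f) V ?E t)). \<exists>y\<in>set (ropts (game_neg (BSg ?b ?c))). game_eq x y"
    proof
      fix x assume "x \<in> set (ropts (snort_aux (Suc f) V ?E t))"
      then obtain v where v: "v \<in> V" "x = opt Right f V ?E t v"
        using snort_ropts[OF fV] by auto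
      from clsR_cases[OF Suc.prems(2) v(1)]
      show "\<exists>y\<in>set (ropts (game_neg (BSg ?b ?c))). game_eq x y"
      proof (elim disjE)
        assume "v = 1" then show ?thesis using R_1 v by (auto simp: ropts_NB)
      next
        assume h: "v \<in> V \<inter> L1 n" then show ?thesis using R_L1[OF h] v card_pos[OF fV h] by (auto simp: ropts_NB)
      next
        assume h: "v \<in> V \<inter> L0 n" then show ?thesis using R_L0[OF h] v card_pos[OF fV h] by (auto simp: ropts_NB)
      qed
    qed
    show "\<forall>x\<in>set (lopts (snort_aux (Suc f) V ?E t)). \<exists>y\<in>set (lopts (game_neg (BSg ?b ?c))). game_eq x y"
    proof
      fix x assume "x \<in> set (lopts (snort_aux (Suc f) V ?E t))"
      then obtain v where v: "v \<in> V" "t v \<noteq> Red" "x = opt Left f V ?E t v"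
        using snort_lopts[OF fV] by auto
      from clsR_cases[OF Suc.prems(2) v(1)]
      show "\<exists>y\<in>set (lopts (game_neg (BSg ?b ?c))). game_eq x y"
      proof (elim disjE)
        assume "v = 1" then show ?thesis using v cl(4) by simp
      next
        assume h: "v \<in> V \<inter> L1 n" then show ?thesis using L_L1[OF h] v card_pos[OF fV h] by (auto simp: lopts_NB)
      next
        assume h: "v \<in> V \<inter> L0 n" then show ?thesis using L_L0[OF h] v card_pos[OF fV h] by (auto simp: lopts_NB)
      qed
    qed
    show "\<forall>y\<in>set (ropts (game_neg (BSg ?b ?c))). \<exists>x\<in>set (ropts (snort_aux (Suc f) V ?E t)). game_eq x y"
    proof
      fix y assume "y \<in> set (ropts (game_neg (BSg ?b ?c)))"
      then consider "y = Iso 0 ?b ?c" | "0 < ?b" "y = game_neg (BSg (?b - 1) ?c)" | "0 < ?c" "y = game_neg (BSg ?b (?c - 1))"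
        by (auto simp: ropts_NB split: if_splits)
      then show "\<exists>x\<in>set (ropts (snort_aux (Suc f) V ?E t)). game_eq x y"
      proof cases
        case 1
        have "opt Right f V ?E t 1 \<in> set (ropts (snort_aux (Suc f) V ?E t))"
          using snort_ropts[OF fV] cl(2,4) by auto
        then show ?thesis using R_1 1 by blast
      next
        case 2
        then obtain v where h: "v \<in> V \<inter> L1 n" using card_ex by blast
        have "opt Right f V ?E t v \<in> set (ropts (snort_aux (Suc f) V ?E t))"
          using snort_ropts[OF fV] cl(5) h L_facts by auto
        then show ?thesis using R_L1[OF h] 2 by blast
      next
        case 3
        then obtain v where h: "v \<in> V \<inter> L0 n" using card_ex by blast
        have "opt Right f V ?E t v \<in> set (ropts (snort_aux (Suc f) V ?E t))"
          using snort_ropts[OF fV] cl(5) h L_facts by auto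
        then show ?thesis using R_L0[OF h] 3 by blast
      qed
    qed
    show "\<forall>y\<in>set (lopts (game_neg (BSg ?b ?c))). \<exists>x\<in>set (lopts (snort_aux (Suc f) V ?E t)). game_eq x y"
    proof
      fix y assume "y \<in> set (lopts (game_neg (BSg ?b ?c)))"
      then consider "0 < ?b" "y = Iso 0 0 (?b - 1 + ?c)" | "0 < ?c" "y = game_neg (BSg ?b (?c - 1))"
        by (auto simp: lopts_NB split: if_splits)
      then show "\<exists>x\<in>set (lopts (snort_aux (Suc f) V ?E t)). game_eq x y"
      proof cases
        case 1
        then obtain v where h: "v \<in> V \<inter> L1 n" using card_ex by blast
        have "opt Left f V ?E t v \<in> set (lopts (snort_aux (Suc f) V ?E t))"
          using snort_lopts[OF fV] cl(5) h L_facts by auto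
        then show ?thesis using L_L1[OF h] 1 by blast
      next
        case 2
        then obtain v where h: "v \<in> V \<inter> L0 n" using card_ex by blast
        have "opt Left f V ?E t v \<in> set (lopts (snort_aux (Suc f) V ?E t))"
          using snort_lopts[OF fV] cl(5) h L_facts by auto
        then show ?thesis using L_L0[OF h] 2 by blast
      qed
    qed
  qed
qed

definition clsP :: "nat \<Rightarrow> nat set \<Rightarrow> (nat \<Rightarrow> tint) \<Rightarrow> bool" where
  "clsP n V t \<longleftrightarrow> V \<subseteq> dstar_V n \<and> 0 \<in> V \<and> 1 \<in> V \<and> t 0 = Blue \<and> t 1 = Red \<and>
     (\<forall>u\<in>V. u \<noteq> 0 \<longrightarrow> u \<noteq> 1 \<longrightarrow> t u = Untinted)"

lemma clsP_cases: "clsP n V t \<Longrightarrow> v \<in> V \<Longrightarrow> v = 0 \<or> v = 1 \<or> v \<in> V \<inter> L0 n \<or> v \<in> V \<inter> L1 n"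
  unfolding clsP_def using V_cases by blast

lemma snort_P:
  "card V \<le> f \<Longrightarrow> clsP n V t \<Longrightarrow>
   game_eq (snort_aux f V (dstar_E n) t) (Pg (card (V \<inter> L0 n)) (card (V \<inter> L1 n)))"
proof (induction f arbitrary: V t)
  case 0
  then have "finite V" "1 \<in> V" using fin_V by (auto simp: clsP_def)
  then have "card V > 0" using card_gt_0_iff by blast
  then show ?case using 0 by simp
next
  case (Suc f)
  let ?E = "dstar_E n"
  let ?a = "card (V \<inter> L0 n)" and ?b = "card (V \<inter> L1 n)"
  have cl: "V \<subseteq> dstar_V n" "0 \<in> V" "1 \<in> V" "t 0 = Blue" "t 1 = Red"
    "\<And>u. u \<in> V \<Longrightarrow> u \<noteq> 0 \<Longrightarrow> u \<noteq> 1 \<Longrightarrow> t u = Untinted"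
    using Suc.prems(2) by (auto simp: clsP_def)
  have fV: "finite V" using fin_V[OF cl(1)] .
  have L_0: "game_eq (opt Left f V ?E t 0) (Iso ?a 0 ?b)"
  proof -
    have nb: "nbrs V ?E 0 = insert 1 (V \<inter> L0 n)" using nb_0[of V n] cl(3) by auto
    have mV: "move_V Left V ?E t 0 = V - {0} - {1}"
      unfolding move_V_def nb using cl(5,6) L_facts by auto
    define t' where "t' = move_t Left V ?E t 0"
    have t': "\<And>u. t' u = (if u \<in> insert 1 (V \<inter> L0 n) then Blue else t u)"
      unfolding t'_def move_t_def nb by simp
    let ?V = "V - {0} - {1}"
    have "game_eq (snort_aux f ?V ?E t') (Iso (cnt Blue ?V t') (cnt Red ?V t') (cnt Untinted ?V t'))"
    proof (rule snort_iso)
      show "finite ?V" using fV by simp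
      have "card ?V < card V" using card_move[OF fV, of 0 Left ?E t] mV cl(2) by simp
      then show "card ?V \<le> f" using Suc.prems(1) by simp
      show "\<forall>w\<in>?V. nbrs ?V ?E w = {}"
        by (rule iso_cond) (use cl in auto)
    qed
    moreover have "cnt Blue ?V t' = ?a"
    proof -
      have "{u \<in> ?V. t' u = Blue} = V \<inter> L0 n"
        using t' cl(2,3,6) V_cases[OF cl(1)] L_facts by auto
      then show ?thesis by (simp add: cnt_def)
    qed
    moreover have "cnt Red ?V t' = 0"
    proof -
      have "{u \<in> ?V. t' u = Red} = {}"
        using t' cl(2,3,6) V_cases[OF cl(1)] L_facts by auto
      then show ?thesis unfolding cnt_def by (metis card.empty)
    qed
    moreover have "cnt Untinted ?V t' = ?b"
    proof -
      have "{u \<in> ?V. t' u = Untinted} = V \<inter> L1 n"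
        using t' cl(2,3,6) V_cases[OF cl(1)] L_facts by auto
      then show ?thesis by (simp add: cnt_def)
    qed
    moreover have "opt Left f V ?E t 0 = snort_aux f ?V ?E t'" using mV t'_def by simp
    ultimately show ?thesis by simp
  qed
  have R_1: "game_eq (opt Right f V ?E t 1) (Iso 0 ?b ?a)"
  proof -
    have nb: "nbrs V ?E 1 = insert 0 (V \<inter> L1 n)" using nb_1[of V n] cl(2) by auto
    have mV: "move_V Right V ?E t 1 = V - {1} - {0}"
      unfolding move_V_def nb using cl(4,6) L_facts by auto
    define t' where "t' = move_t Right V ?E t 1"
    have t': "\<And>u. t' u = (if u \<in> insert 0 (V \<inter> L1 n) then Red else t u)"
      unfolding t'_def move_t_def nb by simp
    let ?V = "V - {1} - {0}"
    have "game_eq (snort_aux f ?V ?E t') (Iso (cnt Blue ?V t') (cnt Red ?V t') (cnt Untinted ?V t'))"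
    proof (rule snort_iso)
      show "finite ?V" using fV by simp
      have "card ?V < card V" using card_move[OF fV, of 1 Right ?E t] mV cl(3) by simp
      then show "card ?V \<le> f" using Suc.prems(1) by simp
      show "\<forall>w\<in>?V. nbrs ?V ?E w = {}"
        by (rule iso_cond) (use cl in auto)
    qed
    moreover have "cnt Red ?V t' = ?b"
    proof -
      have "{u \<in> ?V. t' u = Red} = V \<inter> L1 n"
        using t' cl(2,3,6) V_cases[OF cl(1)] L_facts by auto
      then show ?thesis by (simp add: cnt_def)
    qed
    moreover have "cnt Blue ?V t' = 0"
    proof -
      have "{u \<in> ?V. t' u = Blue} = {}"
        using t' cl(2,3,6) V_cases[OF cl(1)] L_facts by auto
      then show ?thesis unfolding cnt_def by (metis card.empty)
    qed
    moreover have "cnt Untinted ?V t' = ?a"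
    proof -
      have "{u \<in> ?V. t' u = Untinted} = V \<inter> L0 n"
        using t' cl(2,3,6) V_cases[OF cl(1)] L_facts by auto
      then show ?thesis by (simp add: cnt_def)
    qed
    moreover have "opt Right f V ?E t 1 = snort_aux f ?V ?E t'" using mV t'_def by simp
    ultimately show ?thesis by simp
  qed
  have L_L0: "v \<in> V \<inter> L0 n \<Longrightarrow> game_eq (opt Left f V ?E t v) (Pg (?a - 1) ?b)" for v
  proof -
    assume v: "v \<in> V \<inter> L0 n"
    have nb: "nbrs V ?E v = {0}" using nb_L0[of v n V] v cl(2) by auto
    have mV: "move_V Left V ?E t v = V - {v}"
      unfolding move_V_def nb using cl(4) by auto
    define t' where "t' = move_t Left V ?E t v"
    have t': "\<And>u. t' u = (if u = 0 then Blue else t u)"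
      unfolding t'_def move_t_def nb by simp
    have "clsP n (V - {v}) t'" using cl t' v L_facts(6,7)[of v n] unfolding clsP_def by auto
    moreover have "card (V - {v}) \<le> f" using Suc.prems(1) v fV by (simp add: card_Diff_singleton)
    ultimately have "game_eq (snort_aux f (V - {v}) ?E t') (Pg (card ((V - {v}) \<inter> L0 n)) (card ((V - {v}) \<inter> L1 n)))"
      using Suc.IH by blast
    moreover have "v \<notin> L1 n" using L_facts(5)[of v n] v by blast
    ultimately show ?thesis using mV t'_def card_rm[OF fV, of v] v by simp
  qed
  have R_L1: "v \<in> V \<inter> L1 n \<Longrightarrow> game_eq (opt Right f V ?E t v) (Pg ?a (?b - 1))" for v
  proof -
    assume v: "v \<in> V \<inter> L1 n"
    have nb: "nbrs V ?E v = {1}" using nb_L1[of v n V] v cl(3) by auto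
    have mV: "move_V Right V ?E t v = V - {v}"
      unfolding move_V_def nb using cl(5) by auto
    define t' where "t' = move_t Right V ?E t v"
    have t': "\<And>u. t' u = (if u = 1 then Red else t u)"
      unfolding t'_def move_t_def nb by simp
    have "clsP n (V - {v}) t'" using cl t' v L_facts(8,9)[of v n] unfolding clsP_def by auto
    moreover have "card (V - {v}) \<le> f" using Suc.prems(1) v fV by (simp add: card_Diff_singleton)
    ultimately have "game_eq (snort_aux f (V - {v}) ?E t') (Pg (card ((V - {v}) \<inter> L0 n)) (card ((V - {v}) \<inter> L1 n)))"
      using Suc.IH by blast
    moreover have "v \<notin> L0 n" using L_facts(5)[of v n] v by blast
    ultimately show ?thesis using mV t'_def card_rm[OF fV, of v] v by simp
  qed
  have L_L1: "v \<in> V \<inter> L1 n \<Longrightarrow> game_eq (opt Left f V ?E t v) (BSg ?a (?b - 1))" for v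
  proof -
    assume v: "v \<in> V \<inter> L1 n"
    have nb: "nbrs V ?E v = {1}" using nb_L1[of v n V] v cl(3) by auto
    have mV: "move_V Left V ?E t v = V - {v} - {1}"
      unfolding move_V_def nb using cl(5) by auto
    define t' where "t' = move_t Left V ?E t v"
    have t': "\<And>u. t' u = (if u = 1 then Blue else t u)"
      unfolding t'_def move_t_def nb by simp
    let ?V = "V - {v} - {1}"
    have "clsB n ?V t'" using cl t' v L_facts(8,9)[of v n] unfolding clsB_def by auto
    moreover have "card ?V \<le> f" using card_move[OF fV, of v Left ?E t] mV v Suc.prems(1) by simp
    ultimately have "game_eq (snort_aux f ?V ?E t') (BSg (card (?V \<inter> L0 n)) (card (?V \<inter> L1 n)))"
      using snort_BS by blast
    moreover have "v \<notin> L0 n" using L_facts(5)[of v n] v by blast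
    moreover have "finite (V - {v})" using fV by simp
    ultimately show ?thesis using mV t'_def card_rm[OF fV, of v] card_rm[of "V - {v}" 1] v L_facts(2,4) by simp
  qed
  have R_L0: "v \<in> V \<inter> L0 n \<Longrightarrow> game_eq (opt Right f V ?E t v) (game_neg (BSg ?b (?a - 1)))" for v
  proof -
    assume v: "v \<in> V \<inter> L0 n"
    have nb: "nbrs V ?E v = {0}" using nb_L0[of v n V] v cl(2) by auto
    have mV: "move_V Right V ?E t v = V - {v} - {0}"
      unfolding move_V_def nb using cl(4) by auto
    define t' where "t' = move_t Right V ?E t v"
    have t': "\<And>u. t' u = (if u = 0 then Red else t u)"
      unfolding t'_def move_t_def nb by simp
    let ?V = "V - {v} - {0}"
    have "clsR n ?V t'" using cl t' v L_facts(6,7)[of v n] unfolding clsR_def by auto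
    moreover have "card ?V \<le> f" using card_move[OF fV, of v Right ?E t] mV v Suc.prems(1) by simp
    ultimately have "game_eq (snort_aux f ?V ?E t') (game_neg (BSg (card (?V \<inter> L1 n)) (card (?V \<inter> L0 n))))"
      using snort_RS by blast
    moreover have "v \<notin> L1 n" using L_facts(5)[of v n] v by blast
    moreover have "finite (V - {v})" using fV by simp
    ultimately show ?thesis using mV t'_def card_rm[OF fV, of v] card_rm[of "V - {v}" 0] v L_facts(1,3) by simp
  qed
  show ?case
  proof (rule eq_by_corr2)
    show "\<forall>x\<in>set (lopts (snort_aux (Suc f) V ?E t)). \<exists>y\<in>set (lopts (Pg ?a ?b)). game_eq x y"
    proof
      fix x assume "x \<in> set (lopts (snort_aux (Suc f) V ?E t))"
      then obtain v where v: "v \<in> V" "t v \<noteq> Red" "x = opt Left f V ?E t v"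
        using snort_lopts[OF fV] by auto
      from clsP_cases[OF Suc.prems(2) v(1)]
      show "\<exists>y\<in>set (lopts (Pg ?a ?b)). game_eq x y"
      proof (elim disjE)
        assume "v = 0" then show ?thesis using L_0 v by (auto simp: lopts_Pg)
      next
        assume "v = 1" then show ?thesis using v cl(5) by simp
      next
        assume h: "v \<in> V \<inter> L0 n" then show ?thesis using L_L0[OF h] v card_pos[OF fV h] by (auto simp: lopts_Pg)
      next
        assume h: "v \<in> V \<inter> L1 n" then show ?thesis using L_L1[OF h] v card_pos[OF fV h] by (auto simp: lopts_Pg)
      qed
    qed
    show "\<forall>x\<in>set (ropts (snort_aux (Suc f) V ?E t)). \<exists>y\<in>set (ropts (Pg ?a ?b)). game_eq x y"
    proof
      fix x assume "x \<in> set (ropts (snort_aux (Suc f) V ?E t))"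
      then obtain v where v: "v \<in> V" "t v \<noteq> Blue" "x = opt Right f V ?E t v"
        using snort_ropts[OF fV] by auto
      from clsP_cases[OF Suc.prems(2) v(1)]
      show "\<exists>y\<in>set (ropts (Pg ?a ?b)). game_eq x y"
      proof (elim disjE)
        assume "v = 0" then show ?thesis using v cl(4) by simp
      next
        assume "v = 1" then show ?thesis using R_1 v by (auto simp: ropts_Pg)
      next
        assume h: "v \<in> V \<inter> L0 n" then show ?thesis using R_L0[OF h] v card_pos[OF fV h] by (auto simp: ropts_Pg)
      next
        assume h: "v \<in> V \<inter> L1 n" then show ?thesis using R_L1[OF h] v card_pos[OF fV h] by (auto simp: ropts_Pg)
      qed
    qed
    show "\<forall>y\<in>set (lopts (Pg ?a ?b)). \<exists>x\<in>set (lopts (snort_aux (Suc f) V ?E t)). game_eq x y"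
    proof
      fix y assume "y \<in> set (lopts (Pg ?a ?b))"
      then consider "y = Iso ?a 0 ?b" | "0 < ?a" "y = Pg (?a - 1) ?b" | "0 < ?b" "y = BSg ?a (?b - 1)"
        by (auto simp: lopts_Pg split: if_splits)
      then show "\<exists>x\<in>set (lopts (snort_aux (Suc f) V ?E t)). game_eq x y"
      proof cases
        case 1
        have "opt Left f V ?E t 0 \<in> set (lopts (snort_aux (Suc f) V ?E t))"
          using snort_lopts[OF fV] cl(2,4) by auto
        then show ?thesis using L_0 1 by blast
      next
        case 2
        then obtain v where h: "v \<in> V \<inter> L0 n" using card_ex by blast
        have "opt Left f V ?E t v \<in> set (lopts (snort_aux (Suc f) V ?E t))"
          using snort_lopts[OF fV] cl(6) h L_facts by auto
        then show ?thesis using L_L0[OF h] 2 by blast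
      next
        case 3
        then obtain v where h: "v \<in> V \<inter> L1 n" using card_ex by blast
        have "opt Left f V ?E t v \<in> set (lopts (snort_aux (Suc f) V ?E t))"
          using snort_lopts[OF fV] cl(6) h L_facts by auto
        then show ?thesis using L_L1[OF h] 3 by blast
      qed
    qed
    show "\<forall>y\<in>set (ropts (Pg ?a ?b)). \<exists>x\<in>set (ropts (snort_aux (Suc f) V ?E t)). game_eq x y"
    proof
      fix y assume "y \<in> set (ropts (Pg ?a ?b))"
      then consider "y = Iso 0 ?b ?a" | "0 < ?b" "y = Pg ?a (?b - 1)" | "0 < ?a" "y = game_neg (BSg ?b (?a - 1))"
        by (auto simp: ropts_Pg split: if_splits)
      then show "\<exists>x\<in>set (ropts (snort_aux (Suc f) V ?E t)). game_eq x y"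
      proof cases
        case 1
        have "opt Right f V ?E t 1 \<in> set (ropts (snort_aux (Suc f) V ?E t))"
          using snort_ropts[OF fV] cl(3,5) by auto
        then show ?thesis using R_1 1 by blast
      next
        case 2
        then obtain v where h: "v \<in> V \<inter> L1 n" using card_ex by blast
        have "opt Right f V ?E t v \<in> set (ropts (snort_aux (Suc f) V ?E t))"
          using snort_ropts[OF fV] cl(6) h L_facts by auto
        then show ?thesis using R_L1[OF h] 2 by blast
      next
        case 3
        then obtain v where h: "v \<in> V \<inter> L0 n" using card_ex by blast
        have "opt Right f V ?E t v \<in> set (ropts (snort_aux (Suc f) V ?E t))"
          using snort_ropts[OF fV] cl(6) h L_facts by auto
        then show ?thesis using R_L0[OF h] 3 by blast
      qed
    qed
  qed
qed

lemma Iso_eq: "int k - int r = int k' - int r' \<Longrightarrow> even u = even u' \<Longrightarrow> game_eq (Iso k r u) (Iso k' r' u')"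
  unfolding game_eq_def by (simp add: Iso_le)

lemma snort_dstar: "game_eq (snort (dstar_V n) (dstar_E n) dstar_t) (Pg n n)"
proof -
  have c: "clsP n (dstar_V n) dstar_t" by (auto simp: clsP_def dstar_t_def dstar_V_def)
  have a: "dstar_V n \<inter> L0 n = {2..n+1}" by (auto simp: dstar_V_def L0_def)
  have b: "dstar_V n \<inter> L1 n = {n+2..2*n+1}" by (auto simp: dstar_V_def L1_def)
  show ?thesis using snort_P[OF le_refl c] unfolding snort_def a b by simp
qed

theorem lemma5:
  fixes n :: nat
  assumes "n \<ge> 1"
  shows "(even n \<longrightarrow> game_eq (snort (dstar_V n) (dstar_E n) dstar_t)
                         (Game [game_nat n] [game_neg (game_nat n)]))
       \<and> (odd n \<longrightarrow> game_eq (snort (dstar_V n) (dstar_E n) dstar_t)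
                         (Game [game_add (game_nat n) game_star]
                               [game_add (game_neg (game_nat n)) game_star]))"
proof -
  have G: "game_eq (snort (dstar_V n) (dstar_E n) dstar_t) (Game [Iso n 0 n] [Iso 0 n n])"
    using eq_trans[OF snort_dstar Pg_main[OF assms]] .
  have T: "game_eq (Game [Iso n 0 n] [Iso 0 n n]) (Game [Iso n 0 e] [Iso 0 n e])" if "even n = even e" for e
    by (rule eq_by_corr) (use that in \<open>auto intro: Iso_eq\<close>)
  show ?thesis
  proof (intro conjI impI)
    assume "even n"
    then have "game_eq (Game [Iso n 0 n] [Iso 0 n n]) (Game [Iso n 0 0] [Iso 0 n 0])" using T[of 0] by simp
    then show "game_eq (snort (dstar_V n) (dstar_E n) dstar_t) (Game [game_nat n] [game_neg (game_nat n)])"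
      using eq_trans[OF G] by (simp add: nat_Iso neg_Iso)
  next
    assume "odd n"
    then have "game_eq (Game [Iso n 0 n] [Iso 0 n n]) (Game [Iso n 0 1] [Iso 0 n 1])" using T[of 1] by simp
    then show "game_eq (snort (dstar_V n) (dstar_E n) dstar_t)
       (Game [game_add (game_nat n) game_star] [game_add (game_neg (game_nat n)) game_star])"
      using eq_trans[OF G] by (simp add: nat_Iso neg_Iso add_star1 add_star2)
  qed
qed


end
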